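(* Let $a_1,\dots,a_n>0$ and let $\tilde{x}\in\mathbb{R}^n$ satisfy $\sum_{j=1}^n a_j\tilde{x}_j\neq0$. Then $\pi_{\mathrm{PoS}}(\tilde{x})$ is the unique optimal solution of $$\min_{v\in\Delta_n}\ \big\|v-P^F(\tilde{x})\big\|_{\rightleftharpoons}.$$
   Context: $\Delta_n=\{v\in\mathbb{R}^n: v\ge0,\ \sum_i v_i=1\}$ is the probability simplex. For $y\in\mathbb{R}^n$ with $\sum_j a_jy_j\ne0$, the allocation formula is $P^F(y)_i=\frac{a_iy_i}{\sum_{j=1}^n a_jy_j}$, $i\in[n]$. For $v\in\mathbb{R}^n$, $\|v\|_{\rightleftharpoons}=\max_i v_i-\min_i v_i$. The projection-onto-simplex mechanism is $\pi_{\mathrm{PoS}}(\tilde{x})=\arg\min_{v\in\Delta_n}\|v-P^F(\tilde{x})\|_2$ (Euclidean projection of $P^F(\tilde{x})$ onto $\Delta_n$). *)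

theory Defs
  imports "HOL-Analysis.Analysis"
begin

definition prob_simplex :: "(real ^ 'n) set" where
  "prob_simplex = {v. (\<forall>i. 0 \<le> v $ i) \<and> (\<Sum>i\<in>UNIV. v $ i) = 1}"

definition PF :: "real ^ 'n \<Rightarrow> real ^ 'n \<Rightarrow> real ^ 'n" where
  "PF a y = (\<chi> i. a $ i * y $ i / (\<Sum>j\<in>UNIV. a $ j * y $ j))"

definition spread_norm :: "real ^ 'n \<Rightarrow> real" where
  "spread_norm v = Max (range (\<lambda>i. v $ i)) - Min (range (\<lambda>i. v $ i))"

text \<open>Euclidean projection onto the simplex (library closest_point; the norm on real^'n is L2).\<close>
definition pi_PoS :: "real ^ 'n \<Rightarrow> real ^ 'n \<Rightarrow> real ^ 'n" where
  "pi_PoS a x = closest_point prob_simplex (PF a x)"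

end

theory Submission
  imports Defs
begin

lemma spread_ge: "(z::real^'n) $ i - z $ j \<le> spread_norm z"
proof -
  have "z $ i \<le> Max (range (\<lambda>i. z $ i))" by (rule Max_ge) auto
  moreover have "Min (range (\<lambda>i. z $ i)) \<le> z $ j" by (rule Min_le) auto
  ultimately show ?thesis unfolding spread_norm_def by linarith
qed

lemma spread_attained:
  "\<exists>a b. spread_norm (z::real^'n) = z $ a - z $ b \<and> (\<forall>k. z $ b \<le> z $ k \<and> z $ k \<le> z $ a)"
proof -
  have "Max (range (\<lambda>i. z $ i)) \<in> range (\<lambda>i. z $ i)" by (rule Max_in) auto
  then obtain a where a: "Max (range (\<lambda>i. z $ i)) = z $ a" by (metis rangeE)
  have "Min (range (\<lambda>i. z $ i)) \<in> range (\<lambda>i. z $ i)" by (rule Min_in) auto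
  then obtain b where b: "Min (range (\<lambda>i. z $ i)) = z $ b" by (metis rangeE)
  have "\<forall>k. z $ b \<le> z $ k \<and> z $ k \<le> z $ a"
    using a b by (metis Max_ge Min_le finite UNIV_I finite_imageI image_eqI)
  then show ?thesis using a b unfolding spread_norm_def by (intro exI[of _ a] exI[of _ b]) simp
qed

lemma exists_nonneg:
  fixes f :: "'n::finite \<Rightarrow> real"
  assumes "(\<Sum>i\<in>UNIV. f i) = 0" shows "\<exists>k. 0 \<le> f k"
proof (rule ccontr)
  assume "\<not> ?thesis"
  then have "\<forall>k. 0 < - f k" by (simp add: not_le)
  then have "0 < (\<Sum>i\<in>UNIV. - f i)" by (intro sum_pos) auto
  then show False using assms by (simp add: sum_negf)
qed

lemma simplex_closed: "closed (prob_simplex :: (real^'n) set)"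
proof -
  have "prob_simplex = {v::real^'n. \<forall>i. 0 \<le> v $ i} \<inter> {v. inner (\<chi> i. 1) v = 1}"
    unfolding prob_simplex_def by (auto simp: inner_vec_def)
  moreover have "closed {v::real^'n. \<forall>i. 0 \<le> v $ i}"
    by (rule closed_positive_orthant)
  moreover have "closed {v::real^'n. inner (\<chi> i. 1) v = 1}" by (rule closed_hyperplane)
  ultimately show ?thesis by (metis closed_Int)
qed

lemma simplex_convex: "convex (prob_simplex :: (real^'n) set)"
  unfolding convex_def prob_simplex_def
  by (auto simp: sum.distrib sum_distrib_left[symmetric])

lemma simplex_ne: "(prob_simplex :: (real^'n) set) \<noteq> {}"
proof -
  have "(\<chi> i. 1 / real CARD('n)) \<in> (prob_simplex :: (real^'n) set)"
    unfolding prob_simplex_def by auto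
  then show ?thesis by auto
qed

lemma delta_inner: "inner (u::real^'n) (\<chi> k. if k = i then c else 0) = u $ i * c"
  by (simp add: inner_vec_def if_distrib cong: if_cong)

theorem theorem2:
  fixes a x :: "real ^ 'n"
  assumes "\<forall>i. 0 < a $ i"
    and "(\<Sum>j\<in>UNIV. a $ j * x $ j) \<noteq> 0"
  shows "pi_PoS a x \<in> prob_simplex
    \<and> (\<forall>w\<in>prob_simplex. spread_norm (pi_PoS a x - PF a x) \<le> spread_norm (w - PF a x))
    \<and> (\<forall>w\<in>prob_simplex. spread_norm (w - PF a x) \<le> spread_norm (pi_PoS a x - PF a x) \<longrightarrow> w = pi_PoS a x)"
proof -
  define p where "p = PF a x"
  define v where "v = pi_PoS a x"
  define u where "u = p - v"
  have vS: "v \<in> prob_simplex"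
    unfolding v_def pi_PoS_def using closest_point_in_set[OF simplex_closed simplex_ne] .
  have sp: "(\<Sum>i\<in>UNIV. p $ i) = 1"
    using assms(2) unfolding p_def PF_def by (simp add: sum_divide_distrib[symmetric])
  have sv: "(\<Sum>i\<in>UNIV. v $ i) = 1" "\<forall>i. 0 \<le> v $ i" using vS unfolding prob_simplex_def by auto
  have dot: "\<And>w. w \<in> prob_simplex \<Longrightarrow> inner u (w - v) \<le> 0"
    unfolding u_def p_def v_def pi_PoS_def
    by (rule closest_point_dot[OF simplex_convex simplex_closed])
  have K: "u $ i \<le> u $ j" if "0 < v $ j" for i j
  proof (cases "i = j")
    case False
    define w where "w = v + (\<chi> k. if k = i then v $ j else 0) - (\<chi> k. if k = j then v $ j else 0)"
    have "w $ k = (if k = j then 0 else if k = i then v $ i + v $ j else v $ k)" for k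
      unfolding w_def using False by auto
    then have "w \<in> prob_simplex" 
    proof -
      have "(\<Sum>k\<in>UNIV. w $ k) = (\<Sum>k\<in>UNIV. v $ k) + v $ j - v $ j"
        unfolding w_def by (simp add: sum.distrib sum_subtractf)
      moreover have "\<forall>k. 0 \<le> w $ k" unfolding w_def using sv(2) by auto
      ultimately show ?thesis using sv unfolding prob_simplex_def by auto
    qed
    then have "inner u (w - v) \<le> 0" by (rule dot)
    moreover have "inner u (w - v) = u $ i * v $ j - u $ j * v $ j"
      unfolding w_def by (simp add: inner_diff_right delta_inner)
    ultimately have "(u $ i - u $ j) * v $ j \<le> 0" by (simp add: algebra_simps)
    then show ?thesis using that by (simp add: mult_le_0_iff)
  qed simp
  have su: "(\<Sum>i\<in>UNIV. u $ i) = 0" unfolding u_def using sp sv by (simp add: sum_subtractf)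
  obtain k0 where k0: "0 \<le> u $ k0" using exists_nonneg[OF su] by auto
  have uniq: "w = v" if wS: "w \<in> prob_simplex" and H: "spread_norm (w - p) \<le> spread_norm (v - p)" for w
  proof -
    define d where "d = w - p"
    have sw: "(\<Sum>i\<in>UNIV. w $ i) = 1" "\<forall>i. 0 \<le> w $ i" using wS unfolding prob_simplex_def by auto
    have sd: "(\<Sum>i\<in>UNIV. d $ i) = 0" unfolding d_def using sp sw by (simp add: sum_subtractf)
    obtain k1 where k1: "0 \<le> d $ k1" using exists_nonneg[OF sd] by auto
    obtain ia ib where ab: "spread_norm (v - p) = (v - p) $ ia - (v - p) $ ib"
      "\<forall>k. (v - p) $ ib \<le> (v - p) $ k \<and> (v - p) $ k \<le> (v - p) $ ia"
      using spread_attained by blast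
    have ab': "spread_norm (v - p) = u $ ib - u $ ia" "\<forall>k. u $ ia \<le> u $ k \<and> u $ k \<le> u $ ib"
    proof -
      show "spread_norm (v - p) = u $ ib - u $ ia" using ab(1) unfolding u_def by simp
      show "\<forall>k. u $ ia \<le> u $ k \<and> u $ k \<le> u $ ib"
      proof
        fix k show "u $ ia \<le> u $ k \<and> u $ k \<le> u $ ib"
          using ab(2)[rule_format, of k] unfolding u_def by simp
      qed
    qed
    have dk: "d $ k - spread_norm (v - p) \<le> d $ j" for k j
      using spread_ge[of d k j] H unfolding d_def by linarith
    have ge: "v $ j \<le> w $ j" for j
    proof (cases "v $ j = 0")
      case True then show ?thesis using sw by auto
    next
      case False
      then have vj: "0 < v $ j" using sv(2)[rule_format, of j] by linarith
      have uj: "u $ j = u $ ib" using K[OF vj, of ib] ab' by (meson order_antisym)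
      have "- u $ j \<le> d $ j"
      proof (cases "v $ ia = 0")
        case True
        have "d $ ia \<ge> - u $ ia" unfolding d_def u_def using True sw by auto
        then show ?thesis using dk[of ia j] ab' uj by linarith
      next
        case False
        then have "0 < v $ ia" using sv(2)[rule_format, of ia] by linarith
        then have "u $ ib \<le> u $ ia" using K by blast
        then show ?thesis using dk[of k1 j] k1 ab'(1) ab'(2)[rule_format, of k0] uj k0 by linarith
      qed
      then show ?thesis unfolding d_def u_def by simp
    qed
    have "(\<Sum>i\<in>UNIV. w $ i - v $ i) = 0" using sw sv by (simp add: sum_subtractf)
    then have "\<forall>i\<in>UNIV. w $ i - v $ i = 0"
      using sum_nonneg_eq_0_iff[of UNIV "\<lambda>i. w $ i - v $ i"] ge by auto
    then show ?thesis by (simp add: vec_eq_iff)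
  qed
  have opt: "spread_norm (v - p) \<le> spread_norm (w - p)" if "w \<in> prob_simplex" for w
    using uniq[OF that] by force
  show ?thesis using vS opt uniq unfolding p_def v_def by blast
qed

end
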